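(* Let $Q$ and $W$ satisfy the standing assumptions and $l\in\mathbb N_0$. Then $Q$ is simulated by $\hat Q^{I^l_0}$ w.r.t. $U\times Y$, i.e. there exists a simulation relation from $Q$ to $\hat Q^{I^l_0}$ w.r.t. $U\times Y$.
   Context: Strings and signals: $\diamond$ is a symbol not in any other set considered. For a set $A$ and $l\in\mathbb N_0$, $A^l$ is the set of strings of length $l$ over $A$, indexed $\zeta=\zeta(0)\cdots\zeta(l-1)$; $\lambda$ is the empty string and $\cdot$ denotes concatenation. For a map $w$ on $\mathbb Z$ (or a string) and integers $t_1\le t_2$, $w|_{[t_1,t_2]}=w(t_1)\cdots w(t_2)$ is the string of length $t_2-t_1+1$ (absolute time forgotten); if $t_2<t_1$ it is $\lambda$. State machines: a state machine is $Q=(X,U,Y,\delta,X_0)$ with $X_0\subseteq X$, $\delta\subseteq X\times U\times Y\times X$. Let $H_\delta(x)=\{y:\exists u,x'.\,(x,u,y,x')\in\delta\}$, $F_\delta(x,u)=\{x':\exists y\in H_\delta(x).\,(x,u,y,x')\in\delta\}$. The full behavior $\mathcal B_f(Q)$ is the set of $(\mu,\nu,\xi)\in(U\times Y\times X)^{\mathbb N_0}$ with $\xi(0)\in X_0$ and $(\xi(k),\mu(k),\nu(k),\xi(k+1))\in\delta$ for all $k\in\mathbb N_0$. $Q$ is live and reachable if every $x\in X_0$ is $\xi(0)$ for some $(\mu,\nu,\xi)\in\mathcal B_f(Q)$ and every $x\in X$ is $\xi(k)$ for some such trajectory and some $k$. Standing assumptions: $Q=(X,U,Y,\delta,X_0)$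 is live and reachable and satisfies $(x,u,y,x')\in\delta\iff(x'\in F_\delta(x,u)\wedge y\in H_\delta(x))$ for all $x,x'\in X,u\in U,y\in Y$; the external signal space $W$ is finite and either $W=U\times Y$ or $W=Y$. The projection $\pi_W(u,y)$ is $(u,y)$ if $W=U\times Y$ and $y$ if $W=Y$ (likewise $\pi_{U\times Y}(u,y)=(u,y)$, $\pi_Y(u,y)=y$). Behaviors: $\mathcal B_S(Q)$ is the set of pairs $(w,\xi)$ of maps on $\mathbb Z$ with $w(k)=\xi(k)=\diamond$ for $k<0$ and $(w(k),\xi(k))=(\pi_W(\mu(k),\nu(k)),\xi'(k))$ for $k\ge0$, for some $(\mu,\nu,\xi')\in\mathcal B_f(Q)$. Corresponding strings: for integers $a,b$ and $x\in X$, $E^{[a,b]}(x)=\{\zeta:\exists(w,\xi)\in\mathcal B_S(Q),k\in\mathbb N_0:\ \xi(k)=x,\ \zeta=w|_{[k+a,k+b]}\}$. For $l,m\in\mathbb N_0$ with $m\le l$, $I^l_m=[m-l,m-1]$. Abstract state machine: $\hat Q^{I^l_m}=(\hat X^{I^l_m},U,Y,\hat\delta^{I^l_m},\hat X^{I^l_m}_0)$ with $\hat X^{I^l_m}=\bigcup_{x\in X}E^{I^l_m}(x)$, $\hat X^{I^l_m}_0=\bigcup_{x\in X_0}E^{I^l_m}(x)$, and $(\hat x,u,y,\hat x')\in\hat\delta^{I^l_m}$ iff (1) $\hat x'|_{[0,l-m-1]}=(\hat x|_{[0,l-m-1]}\cdot\pi_W(u,y))|_{[1,l-m]}$, (2)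 $\hat x|_{[l-m,l-1]}=(\pi_W(u,y)\cdot\hat x'|_{[l-m,l-2]})|_{[0,m-1]}$, and (3) there are $x,x'\in X$ with $\hat x\in E^{I^l_m}(x)$, $\hat x'\in E^{I^l_m}(x')$, $(x,u,y,x')\in\delta$. Simulation relations: for state machines $Q_i=(X_i,U,Y,\delta_i,X_{0,i})$, $i=1,2$, and $V\in\{U\times Y,Y\}$, a relation $\mathcal R\subseteq X_1\times X_2$ is a simulation relation from $Q_1$ to $Q_2$ w.r.t. $V$ if (a) for every $x_1\in X_{0,1}$ there is $x_2\in X_{0,2}$ with $(x_1,x_2)\in\mathcal R$, and (b) for all $(x_1,x_2)\in\mathcal R$ and $(x_1,u_1,y_1,x_1')\in\delta_1$ there exist $u_2,y_2,x_2'$ with $(x_2,u_2,y_2,x_2')\in\delta_2$, $(x_1',x_2')\in\mathcal R$ and $\pi_V(u_1,y_1)=\pi_V(u_2,y_2)$. *)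

theory Defs
  imports Main
begin

definition state_machine ::
  "'x set \<Rightarrow> 'u set \<Rightarrow> 'y set \<Rightarrow> ('x \<times> 'u \<times> 'y \<times> 'x) set \<Rightarrow> 'x set \<Rightarrow> bool" where
  "state_machine X U Y \<delta> X0 \<longleftrightarrow> X0 \<subseteq> X \<and> \<delta> \<subseteq> X \<times> U \<times> Y \<times> X"

definition H_of :: "('x \<times> 'u \<times> 'y \<times> 'x) set \<Rightarrow> 'x \<Rightarrow> 'y set" where
  "H_of \<delta> x = {y. \<exists>u x'. (x, u, y, x') \<in> \<delta>}"

definition F_of :: "('x \<times> 'u \<times> 'y \<times> 'x) set \<Rightarrow> 'x \<Rightarrow> 'u \<Rightarrow> 'x set" where
  "F_of \<delta> x u = {x'. \<exists>y \<in> H_of \<delta> x. (x, u, y, x') \<in> \<delta>}"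

definition full_behavior ::
  "('x \<times> 'u \<times> 'y \<times> 'x) set \<Rightarrow> 'x set \<Rightarrow> ((nat \<Rightarrow> 'u) \<times> (nat \<Rightarrow> 'y) \<times> (nat \<Rightarrow> 'x)) set" where
  "full_behavior \<delta> X0 = {(\<mu>, \<nu>, \<xi>). \<xi> 0 \<in> X0 \<and> (\<forall>k. (\<xi> k, \<mu> k, \<nu> k, \<xi> (Suc k)) \<in> \<delta>)}"

definition live_reachable ::
  "'x set \<Rightarrow> ('x \<times> 'u \<times> 'y \<times> 'x) set \<Rightarrow> 'x set \<Rightarrow> bool" where
  "live_reachable X \<delta> X0 \<longleftrightarrow>
     (\<forall>x \<in> X0. \<exists>(\<mu>, \<nu>, \<xi>) \<in> full_behavior \<delta> X0. \<xi> 0 = x) \<and>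
     (\<forall>x \<in> X. \<exists>(\<mu>, \<nu>, \<xi>) \<in> full_behavior \<delta> X0. \<exists>k. \<xi> k = x)"

(* An element of W is encoded as a pair
   ('u option \<times> 'y): if W = U \<times> Y (flag wU = True) then (u,y) is encoded as
   (Some u, y); if W = Y (wU = False) then y is encoded as (None, y).
   pi_W is the projection. *)
definition piW :: "bool \<Rightarrow> 'u \<Rightarrow> 'y \<Rightarrow> 'u option \<times> 'y" where
  "piW wU u y = (if wU then (Some u, y) else (None, y))"

definition Wset :: "bool \<Rightarrow> 'u set \<Rightarrow> 'y set \<Rightarrow> ('u option \<times> 'y) set" where
  "Wset wU U Y = (\<lambda>(u, y). piW wU u y) ` (U \<times> Y)"

(* The symbol \<diamond> is encoded as None; a W-value w is encoded as Some w. *)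

definition behavior_S ::
  "bool \<Rightarrow> ('x \<times> 'u \<times> 'y \<times> 'x) set \<Rightarrow> 'x set \<Rightarrow>
   ((int \<Rightarrow> ('u option \<times> 'y) option) \<times> (int \<Rightarrow> 'x option)) set" where
  "behavior_S wU \<delta> X0 = {(w, \<xi>). \<exists>(\<mu>, \<nu>, \<xi>') \<in> full_behavior \<delta> X0.
      (\<forall>k::int. k < 0 \<longrightarrow> w k = None \<and> \<xi> k = None) \<and>
      (\<forall>k::int. k \<ge> 0 \<longrightarrow> w k = Some (piW wU (\<mu> (nat k)) (\<nu> (nat k))) \<and> \<xi> k = Some (\<xi>' (nat k)))}"

definition sig_restr :: "(int \<Rightarrow> 'a) \<Rightarrow> int \<Rightarrow> int \<Rightarrow> 'a list" where
  "sig_restr w t1 t2 = map w [t1..t2]"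

definition str_restr :: "'a list \<Rightarrow> int \<Rightarrow> int \<Rightarrow> 'a list" where
  "str_restr \<zeta> t1 t2 = map (\<lambda>i. \<zeta> ! nat i) [t1..t2]"

definition E_str ::
  "bool \<Rightarrow> ('x \<times> 'u \<times> 'y \<times> 'x) set \<Rightarrow> 'x set \<Rightarrow> int \<Rightarrow> int \<Rightarrow> 'x \<Rightarrow>
   ('u option \<times> 'y) option list set" where
  "E_str wU \<delta> X0 a b x = {\<zeta>. \<exists>(w, \<xi>) \<in> behavior_S wU \<delta> X0. \<exists>k::nat.
      \<xi> (int k) = Some x \<and> \<zeta> = sig_restr w (int k + a) (int k + b)}"

definition hatX ::
  "bool \<Rightarrow> 'x set \<Rightarrow> ('x \<times> 'u \<times> 'y \<times> 'x) set \<Rightarrow> 'x set \<Rightarrow> nat \<Rightarrow> nat \<Rightarrow>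
   ('u option \<times> 'y) option list set" where
  "hatX wU X \<delta> X0 l m = (\<Union>x \<in> X. E_str wU \<delta> X0 (int m - int l) (int m - 1) x)"

definition hatX0 ::
  "bool \<Rightarrow> ('x \<times> 'u \<times> 'y \<times> 'x) set \<Rightarrow> 'x set \<Rightarrow> nat \<Rightarrow> nat \<Rightarrow>
   ('u option \<times> 'y) option list set" where
  "hatX0 wU \<delta> X0 l m = (\<Union>x \<in> X0. E_str wU \<delta> X0 (int m - int l) (int m - 1) x)"

definition hatDelta ::
  "bool \<Rightarrow> 'x set \<Rightarrow> ('x \<times> 'u \<times> 'y \<times> 'x) set \<Rightarrow> 'x set \<Rightarrow> nat \<Rightarrow> nat \<Rightarrow>
   (('u option \<times> 'y) option list \<times> 'u \<times> 'y \<times> ('u option \<times> 'y) option list) set" where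
  "hatDelta wU X \<delta> X0 l m = {(xh, u, y, xh').
     xh \<in> hatX wU X \<delta> X0 l m \<and> xh' \<in> hatX wU X \<delta> X0 l m \<and>
     str_restr xh' 0 (int l - int m - 1) =
        str_restr (str_restr xh 0 (int l - int m - 1) @ [Some (piW wU u y)]) 1 (int l - int m) \<and>
     str_restr xh (int l - int m) (int l - 1) =
        str_restr ([Some (piW wU u y)] @ str_restr xh' (int l - int m) (int l - 2)) 0 (int m - 1) \<and>
     (\<exists>x \<in> X. \<exists>x' \<in> X. xh \<in> E_str wU \<delta> X0 (int m - int l) (int m - 1) x \<and>
        xh' \<in> E_str wU \<delta> X0 (int m - int l) (int m - 1) x' \<and> (x, u, y, x') \<in> \<delta>)}"

(* simulation relation from Q1 to Q2 w.r.t. V (vU = True: V = U \<times> Y, False: V = Y) *)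
definition sim_rel ::
  "bool \<Rightarrow> 'x1 set \<Rightarrow> ('x1 \<times> 'u \<times> 'y \<times> 'x1) set \<Rightarrow> 'x1 set \<Rightarrow>
   'x2 set \<Rightarrow> ('x2 \<times> 'u \<times> 'y \<times> 'x2) set \<Rightarrow> 'x2 set \<Rightarrow> ('x1 \<times> 'x2) set \<Rightarrow> bool" where
  "sim_rel vU X1 \<delta>1 X01 X2 \<delta>2 X02 R \<longleftrightarrow>
     R \<subseteq> X1 \<times> X2 \<and>
     (\<forall>x1 \<in> X01. \<exists>x2 \<in> X02. (x1, x2) \<in> R) \<and>
     (\<forall>x1 x2 u1 y1 x1'. (x1, x2) \<in> R \<and> (x1, u1, y1, x1') \<in> \<delta>1 \<longrightarrow>
        (\<exists>u2 y2 x2'. (x2, u2, y2, x2') \<in> \<delta>2 \<and> (x1', x2') \<in> R \<and> piW vU u1 y1 = piW vU u2 y2))"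

end

theory Submission
  imports Defs
begin

lemma str_restr_full: "str_restr xs 0 (int (length xs) - 1) = xs"
  unfolding str_restr_def by (rule nth_equalityI) auto

lemma str_restr_tl: "length ys = Suc n \<Longrightarrow> str_restr ys 1 (int n) = tl ys"
  unfolding str_restr_def
  by (rule nth_equalityI) (auto simp: nth_tl nat_add_distrib)

lemma splice:
  assumes b1: "(\<mu>, \<nu>, \<xi>) \<in> full_behavior \<delta> X0"
    and tr: "(\<xi> k, u, y, x') \<in> \<delta>"
    and b2: "(\<mu>2, \<nu>2, \<xi>2) \<in> full_behavior \<delta> X0"
    and j: "\<xi>2 j = x'"
  shows "((\<lambda>n. if n < k then \<mu> n else if n = k then u else \<mu>2 (n - Suc k + j)),
          (\<lambda>n. if n < k then \<nu> n else if n = k then y else \<nu>2 (n - Suc k + j)),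
          (\<lambda>n. if n \<le> k then \<xi> n else \<xi>2 (n - Suc k + j))) \<in> full_behavior \<delta> X0"
proof -
  have s1: "\<xi> 0 \<in> X0" "\<forall>n. (\<xi> n, \<mu> n, \<nu> n, \<xi> (Suc n)) \<in> \<delta>"
    using b1 unfolding full_behavior_def by auto
  have s2: "\<forall>n. (\<xi>2 n, \<mu>2 n, \<nu>2 n, \<xi>2 (Suc n)) \<in> \<delta>"
    using b2 unfolding full_behavior_def by auto
  define \<mu>3 where "\<mu>3 = (\<lambda>n. if n < k then \<mu> n else if n = k then u else \<mu>2 (n - Suc k + j))"
  define \<nu>3 where "\<nu>3 = (\<lambda>n. if n < k then \<nu> n else if n = k then y else \<nu>2 (n - Suc k + j))"
  define \<xi>3 where "\<xi>3 = (\<lambda>n. if n \<le> k then \<xi> n else \<xi>2 (n - Suc k + j))"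
  have "(\<xi>3 n, \<mu>3 n, \<nu>3 n, \<xi>3 (Suc n)) \<in> \<delta>" for n
  proof -
    consider "n < k" | "n = k" | "n > k" by arith
    then show ?thesis
    proof cases
      case 1 then show ?thesis using s1(2) unfolding \<mu>3_def \<nu>3_def \<xi>3_def by auto
    next
      case 2 then show ?thesis using tr j unfolding \<mu>3_def \<nu>3_def \<xi>3_def by auto
    next
      case 3
      then have "Suc n - Suc k + j = Suc (n - Suc k + j)" by arith
      then show ?thesis using 3 s2 unfolding \<mu>3_def \<nu>3_def \<xi>3_def by auto
    qed
  qed
  moreover have "\<xi>3 0 \<in> X0" using s1(1) unfolding \<xi>3_def by simp
  ultimately have "(\<mu>3, \<nu>3, \<xi>3) \<in> full_behavior \<delta> X0"
    unfolding full_behavior_def by simp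
  then show ?thesis unfolding \<mu>3_def \<nu>3_def \<xi>3_def .
qed

theorem mainTheorem4:
  fixes X :: "'x set" and U :: "'u set" and Y :: "'y set"
    and \<delta> :: "('x \<times> 'u \<times> 'y \<times> 'x) set" and X0 :: "'x set"
    and wU :: bool and l :: nat
  assumes "state_machine X U Y \<delta> X0"
    and "live_reachable X \<delta> X0"
    and "\<forall>x \<in> X. \<forall>u \<in> U. \<forall>y \<in> Y. \<forall>x' \<in> X.
           (x, u, y, x') \<in> \<delta> \<longleftrightarrow> (x' \<in> F_of \<delta> x u \<and> y \<in> H_of \<delta> x)"
    and "finite (Wset wU U Y)"
  shows "\<exists>R. sim_rel True X \<delta> X0
              (hatX wU X \<delta> X0 l 0) (hatDelta wU X \<delta> X0 l 0) (hatX0 wU \<delta> X0 l 0) R"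
proof -
  have dX: "\<delta> \<subseteq> X \<times> U \<times> Y \<times> X" and X0X: "X0 \<subseteq> X"
    using assms(1) unfolding state_machine_def by auto
  have live: "\<forall>x \<in> X0. \<exists>(\<mu>, \<nu>, \<xi>) \<in> full_behavior \<delta> X0. \<xi> 0 = x"
   and reach: "\<forall>x \<in> X. \<exists>(\<mu>, \<nu>, \<xi>) \<in> full_behavior \<delta> X0. \<exists>k. \<xi> k = x"
    using assms(2) unfolding live_reachable_def by auto
  define E where "E = E_str wU \<delta> X0 (0 - int l) (0 - 1)"
  define R where "R = {(x, z). x \<in> X \<and> z \<in> E x}"
  have lenE: "length z = l" if "z \<in> E x" for z x
    using that unfolding E_def E_str_def sig_restr_def by auto
  have step: "\<exists>z'. z' \<in> E x' \<and> z' = tl (z @ [Some (piW wU u y)])"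
    if zx: "z \<in> E x" and tr: "(x, u, y, x') \<in> \<delta>" for x u y x' z
  proof -
    obtain w \<xi> k where wb: "(w, \<xi>) \<in> behavior_S wU \<delta> X0" and xk: "\<xi> (int k) = Some x"
      and zdef: "z = sig_restr w (int k - int l) (int k - 1)"
      using zx unfolding E_def E_str_def by auto
    obtain \<mu> \<nu> \<xi>' where b1: "(\<mu>, \<nu>, \<xi>') \<in> full_behavior \<delta> X0"
      and wneg: "\<forall>t::int. t < 0 \<longrightarrow> w t = None \<and> \<xi> t = None"
      and wpos: "\<forall>t::int. t \<ge> 0 \<longrightarrow> w t = Some (piW wU (\<mu> (nat t)) (\<nu> (nat t))) \<and> \<xi> t = Some (\<xi>' (nat t))"
      using wb unfolding behavior_S_def by auto
    have "\<xi>' k = x" using wpos xk by (metis nat_int of_nat_0_le_iff option.inject)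
    have "x' \<in> X" using tr dX by auto
    then obtain \<mu>2 \<nu>2 \<xi>2 j where b2: "(\<mu>2, \<nu>2, \<xi>2) \<in> full_behavior \<delta> X0" and j: "\<xi>2 j = x'"
      using reach by fastforce
    define \<mu>3 where "\<mu>3 = (\<lambda>n. if n < k then \<mu> n else if n = k then u else \<mu>2 (n - Suc k + j))"
    define \<nu>3 where "\<nu>3 = (\<lambda>n. if n < k then \<nu> n else if n = k then y else \<nu>2 (n - Suc k + j))"
    define \<xi>3 where "\<xi>3 = (\<lambda>n. if n \<le> k then \<xi>' n else \<xi>2 (n - Suc k + j))"
    have b3: "(\<mu>3, \<nu>3, \<xi>3) \<in> full_behavior \<delta> X0"
      unfolding \<mu>3_def \<nu>3_def \<xi>3_def
      by (rule splice[OF b1 _ b2 j]) (use tr \<open>\<xi>' k = x\<close> in simp)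
    define w3 where "w3 = (\<lambda>t::int. if t < 0 then None else Some (piW wU (\<mu>3 (nat t)) (\<nu>3 (nat t))))"
    define xi3 where "xi3 = (\<lambda>t::int. if t < 0 then None else Some (\<xi>3 (nat t)))"
    have wb3: "(w3, xi3) \<in> behavior_S wU \<delta> X0"
      unfolding behavior_S_def w3_def xi3_def using b3 by fastforce
    have x3: "xi3 (int (Suc k)) = Some x'"
      proof -
      have "nat (int (Suc k)) = Suc k" by simp
      then show ?thesis unfolding xi3_def \<xi>3_def using j by (simp del: of_nat_Suc)
    qed
    have agree: "w3 t = w t" if "t < int k" for t
    proof (cases "t < 0")
      case True then show ?thesis using wneg unfolding w3_def by simp
    next
      case False
      then have "nat t < k" using that by arith
      then show ?thesis using wpos False unfolding w3_def \<mu>3_def \<nu>3_def by simp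
    qed
    have wk: "w3 (int k) = Some (piW wU u y)" unfolding w3_def \<mu>3_def \<nu>3_def by simp
    define z' where "z' = sig_restr w3 (int (Suc k) + (0 - int l)) (int (Suc k) + (0 - 1))"
    have "z' \<in> E x'" unfolding E_def E_str_def z'_def using wb3 x3 by blast
    moreover have "z' = tl (z @ [Some (piW wU u y)])"
    proof (rule nth_equalityI)
      show "length z' = length (tl (z @ [Some (piW wU u y)]))"
        unfolding z'_def zdef sig_restr_def by simp
    next
      fix i assume "i < length z'"
      then have il: "i < l" unfolding z'_def sig_restr_def by simp
      have lz: "length z = l" unfolding zdef sig_restr_def by simp
      have lhs: "z' ! i = w3 (int k + 1 - int l + int i)"
        unfolding z'_def sig_restr_def using il by (simp add: algebra_simps)
      show "z' ! i = tl (z @ [Some (piW wU u y)]) ! i"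
      proof (cases "Suc i < l")
        case True
        have "tl (z @ [Some (piW wU u y)]) ! i = z ! Suc i"
          using True lz by (simp add: nth_tl nth_append)
        also have "\<dots> = w (int k - int l + int (Suc i))"
          unfolding zdef sig_restr_def using True by simp
        finally show ?thesis using lhs agree[of "int k + 1 - int l + int i"] True
          by (simp add: algebra_simps)
      next
        case False
        then have "i = l - 1" using il by arith
        then show ?thesis using lhs lz il wk by (simp add: nth_tl nth_append)
      qed
    qed
    ultimately show ?thesis by blast
  qed
  have "sim_rel True X \<delta> X0 (hatX wU X \<delta> X0 l 0) (hatDelta wU X \<delta> X0 l 0) (hatX0 wU \<delta> X0 l 0) R"
    unfolding sim_rel_def
  proof (intro conjI allI impI ballI)
    show "R \<subseteq> X \<times> hatX wU X \<delta> X0 l 0"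
      unfolding R_def hatX_def E_def by auto
  next
    fix x assume x: "x \<in> X0"
    then obtain \<mu> \<nu> \<xi> where b: "(\<mu>, \<nu>, \<xi>) \<in> full_behavior \<delta> X0" and x0: "\<xi> 0 = x"
      using live by fastforce
    define w where "w = (\<lambda>t::int. if t < 0 then None else Some (piW wU (\<mu> (nat t)) (\<nu> (nat t))))"
    define xi where "xi = (\<lambda>t::int. if t < 0 then None else Some (\<xi> (nat t)))"
    have wb: "(w, xi) \<in> behavior_S wU \<delta> X0"
      unfolding behavior_S_def w_def xi_def using b by fastforce
    have "xi (int 0) = Some x" unfolding xi_def using x0 by simp
    then have "sig_restr w (int 0 + (0 - int l)) (int 0 + (0 - 1)) \<in> E x"
      unfolding E_def E_str_def using wb by blast
    then show "\<exists>x2\<in>hatX0 wU \<delta> X0 l 0. (x, x2) \<in> R"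
      unfolding R_def hatX0_def using x X0X E_def by auto
  next
    fix x1 x2 u1 y1 x1'
    assume a: "(x1, x2) \<in> R \<and> (x1, u1, y1, x1') \<in> \<delta>"
    then have x1: "x1 \<in> X" and z: "x2 \<in> E x1" and tr: "(x1, u1, y1, x1') \<in> \<delta>"
      unfolding R_def by auto
    have x1': "x1' \<in> X" using tr dX by auto
    obtain z' where z': "z' \<in> E x1'" and zeq: "z' = tl (x2 @ [Some (piW wU u1 y1)])"
      using step[OF z tr] by blast
    have l2: "length x2 = l" using lenE z .
    have l3: "length z' = l" using lenE z' .
    have h1: "x2 \<in> hatX wU X \<delta> X0 l 0" using x1 z unfolding hatX_def E_def by auto
    have h2: "z' \<in> hatX wU X \<delta> X0 l 0" using x1' z' unfolding hatX_def E_def by auto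
    have e1: "str_restr x2 0 (int l - 1) = x2" using str_restr_full[of x2] l2 by simp
    have e2: "str_restr z' 0 (int l - 1) = z'" using str_restr_full[of z'] l3 by simp
    have h3: "str_restr z' 0 (int l - int 0 - 1) =
        str_restr (str_restr x2 0 (int l - int 0 - 1) @ [Some (piW wU u1 y1)]) 1 (int l - int 0)"
      using e1 e2 zeq str_restr_tl[of "x2 @ [Some (piW wU u1 y1)]" l] l2 by simp
    have h4: "str_restr x2 (int l - int 0) (int l - 1) =
        str_restr ([Some (piW wU u1 y1)] @ str_restr z' (int l - int 0) (int l - 2)) 0 (int 0 - 1)"
      unfolding str_restr_def by simp
    have h5: "\<exists>x\<in>X. \<exists>x'\<in>X. x2 \<in> E_str wU \<delta> X0 (int 0 - int l) (int 0 - 1) x \<and>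
              z' \<in> E_str wU \<delta> X0 (int 0 - int l) (int 0 - 1) x' \<and> (x, u1, y1, x') \<in> \<delta>"
      using x1 x1' z z' tr unfolding E_def by auto
    have "(x2, u1, y1, z') \<in> hatDelta wU X \<delta> X0 l 0"
      unfolding hatDelta_def using h1 h2 h3 h4 h5 by blast
    then show "\<exists>u2 y2 x2'. (x2, u2, y2, x2') \<in> hatDelta wU X \<delta> X0 l 0 \<and>
               (x1', x2') \<in> R \<and> piW True u1 y1 = piW True u2 y2"
      using x1' z' unfolding R_def by blast
  qed
  then show ?thesis by blast
qed

end
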